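(* Under the setting and assumptions of the previous statement (symmetric positive definite $A_1,A_2$ with spectra in $[\alpha_1,\beta_1]$, $[\alpha_2,\beta_2]$; level-$h$ block-diagonal parts $A_i^{(h)}$, $h=0,\dots,\ell$; matrices $\widetilde X^{(\ell)},\delta\widetilde X^{(h)}$ with $\|R^{(\ell)}\|_F\le\epsilon\|B\|_F$ and $\|R^{(h)}\|_F\le\epsilon\|\widetilde\Xi^{(h)}\|_F$), with $\kappa=\frac{\beta_1+\beta_2}{\alpha_1+\alpha_2}$ and the additional constraint $\kappa\epsilon<\frac{2}{\ell}$, the matrix $\widetilde X:=\widetilde X^{(0)}=\widetilde X^{(\ell)}+\delta\widetilde X^{(\ell-1)}+\dots+\delta\widetilde X^{(0)}$ satisfies $$\|A_1\widetilde X+\widetilde XA_2-B\|_F\le(\ell+1)^2\kappa\epsilon\|B\|_F.$$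
   Context: For $i=1,2$, fix nested partitions of $\{1,\dots,n_i\}$ into contiguous index sets at levels $h=0,\dots,\ell$ (level $0$ trivial, each level obtained by splitting each set of the previous level into two contiguous parts). $A_i^{(h)}$ is the block-diagonal matrix keeping the entries of $A_i$ with row and column indices in the same level-$h$ set (so $A_i^{(0)}=A_i$). Given $B\in\mathbb R^{n_1\times n_2}$ and matrices $\widetilde X^{(\ell)}$, $\delta\widetilde X^{(h)}$ ($h=\ell-1,\dots,0$): $R^{(\ell)}:=A_1^{(\ell)}\widetilde X^{(\ell)}+\widetilde X^{(\ell)}A_2^{(\ell)}-B$; $\widetilde X^{(h+1)}:=\widetilde X^{(\ell)}+\delta\widetilde X^{(\ell-1)}+\dots+\delta\widetilde X^{(h+1)}$; $\widetilde\Xi^{(h)}:=-(A_1^{(h)}-A_1^{(h+1)})\widetilde X^{(h+1)}-\widetilde X^{(h+1)}(A_2^{(h)}-A_2^{(h+1)})$; $R^{(h)}:=A_1^{(h)}\delta\widetilde X^{(h)}+\delta\widetilde X^{(h)}A_2^{(h)}-\widetilde\Xi^{(h)}$. $\|\cdot\|_F$ is the Frobenius norm. *)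

theory Defs
  imports Complex_Main "Jordan_Normal_Form.Char_Poly"
begin

definition frob :: "real mat \<Rightarrow> real" where
  "frob M = sqrt (\<Sum>i<dim_row M. \<Sum>j<dim_col M. (M $$ (i,j))\<^sup>2)"

definition spd :: "nat \<Rightarrow> real mat \<Rightarrow> bool" where
  "spd n A \<longleftrightarrow> A \<in> carrier_mat n n \<and> A\<^sup>T = A \<and>
     (\<forall>v \<in> carrier_vec n. v \<noteq> 0\<^sub>v n \<longrightarrow> v \<bullet> (A *\<^sub>v v) > 0)"

definition spec_in :: "real mat \<Rightarrow> real \<Rightarrow> real \<Rightarrow> bool" where
  "spec_in A a b \<longleftrightarrow> (\<forall>k. eigenvalue A k \<longrightarrow> a \<le> k \<and> k \<le> b)"

text \<open>Nested partitions of the (0-based) index set {0..<n} into contiguous sets: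
  P h is the partition at level h, for h = 0..l.\<close>
definition nested_partition :: "nat \<Rightarrow> nat \<Rightarrow> (nat \<Rightarrow> nat set set) \<Rightarrow> bool" where
  "nested_partition n l P \<longleftrightarrow> P 0 = {{0..<n}} \<and>
     (\<forall>h<l. \<exists>m :: nat set \<Rightarrow> nat.
        (\<forall>S\<in>P h. \<exists>a b. S = {a..<b} \<and> a < m S \<and> m S < b) \<and>
        P (Suc h) = (\<Union>S\<in>P h. {{x\<in>S. x < m S}, {x\<in>S. m S \<le> x}}))"

definition blkdiag :: "(nat \<Rightarrow> nat set set) \<Rightarrow> nat \<Rightarrow> real mat \<Rightarrow> real mat" where
  "blkdiag P h A = mat (dim_row A) (dim_col A)
     (\<lambda>(i,j). if \<exists>S\<in>P h. i \<in> S \<and> j \<in> S then A $$ (i,j) else 0)"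

end

theory Submission imports Defs "HOL-Analysis.Function_Topology" "HOL-Analysis.L2_Norm"
begin

definition Qm :: "real mat \<Rightarrow> nat \<Rightarrow> (nat \<Rightarrow> real) \<Rightarrow> real" where
  "Qm M n f = (\<Sum>i<n. \<Sum>j<n. f i * M $$ (i,j) * f j)"
definition nsq :: "nat \<Rightarrow> (nat \<Rightarrow> real) \<Rightarrow> real" where
  "nsq n f = (\<Sum>i<n. (f i)^2)"

lemma nsq_nonneg: "0 \<le> nsq n f" by (simp add: nsq_def sum_nonneg)

lemma quad_zero:
  fixes G D :: real
  assumes h: "\<And>t. 0 \<le> 2*t*G + t^2*D" and G0: "0 \<le> G"
  shows "G = 0"
proof (rule ccontr)
  assume "G \<noteq> 0" hence G: "G > 0" using G0 by auto
  define E where "E = \<bar>D\<bar>"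
  have E: "E \<ge> 0" "D \<le> E" by (auto simp: E_def)
  define t where "t = - G / (E + 1)"
  have "0 \<le> 2*t*G + t^2*D" by (rule h)
  also have "t^2 * D \<le> t^2 * E" using E by (simp add: mult_left_mono)
  hence "2*t*G + t^2*D \<le> 2*t*G + t^2*E" by simp
  also have "2*t*G + t^2*E < 0"
  proof -
    have d: "E + 1 > 0" using E by simp
    have t: "t < 0" unfolding t_def using G d by (simp add: divide_pos_pos)
    have "G * E / (E+1) \<le> G" using G E d by (simp add: divide_le_eq)
    hence "t * E \<ge> - G" unfolding t_def by simp
    hence "2*G + t*E > 0" using G by simp
    hence "t * (2*G + t*E) < 0" using t by (simp add: mult_neg_pos)
    thus ?thesis by (simp add: algebra_simps power2_eq_square)
  qed
  finally show False by simp
qed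

lemma Qm_swap:
  fixes M :: "real mat"
  assumes sym: "\<And>i j. i<n \<Longrightarrow> j<n \<Longrightarrow> M$$(i,j) = M$$(j,i)"
  shows "(\<Sum>i<n. \<Sum>j<n. u i * M$$(i,j) * w j) = (\<Sum>i<n. \<Sum>j<n. w i * M$$(i,j) * u j)"
proof -
  have e: "\<And>i j. i<n \<Longrightarrow> j<n \<Longrightarrow> u j * M$$(j,i) * w i = w i * M$$(i,j) * u j"
  proof -
    fix i j assume ij: "i<n" "j<n"
    have "M$$(j,i) = M$$(i,j)" using sym ij by simp
    thus "u j * M$$(j,i) * w i = w i * M$$(i,j) * u j" by (simp add: mult_ac)
  qed
  show ?thesis
    apply (subst sum.swap)
    apply (intro sum.cong refl)
    apply (simp add: e)
    done
qed

lemma Qm_expand: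
  fixes M :: "real mat"
  assumes sym: "\<And>i j. i<n \<Longrightarrow> j<n \<Longrightarrow> M$$(i,j) = M$$(j,i)"
  shows "Qm M n (\<lambda>i. u i + t * w i) = Qm M n u + 2*t*(\<Sum>i<n. \<Sum>j<n. w i * M$$(i,j) * u j) + t^2 * Qm M n w"
proof -
  have "Qm M n (\<lambda>i. u i + t * w i) = Qm M n u + t*(\<Sum>i<n. \<Sum>j<n. u i * M$$(i,j) * w j)
     + t*(\<Sum>i<n. \<Sum>j<n. w i * M$$(i,j) * u j) + t^2 * Qm M n w"
    unfolding Qm_def
    by (simp add: sum.distrib sum_distrib_left algebra_simps power2_eq_square)
  then show ?thesis using Qm_swap[OF sym, where u=u and w=w] by simp
qed

lemma nsq_expand:
  "nsq n (\<lambda>i. u i + t * w i) = nsq n u + 2*t*(\<Sum>i<n. u i * w i) + t^2 * nsq n w"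
  unfolding nsq_def
  by (simp add: sum.distrib sum_distrib_left algebra_simps power2_eq_square)

lemma min_eig:
  fixes M :: "real mat"
  assumes sym: "\<And>i j. i<n \<Longrightarrow> j<n \<Longrightarrow> M$$(i,j) = M$$(j,i)"
    and ev: "\<And>lam u. (\<And>i. i<n \<Longrightarrow> (\<Sum>j<n. M$$(i,j) * u j) = lam * u i) \<Longrightarrow> (\<exists>i<n. u i \<noteq> 0) \<Longrightarrow> \<alpha> \<le> lam"
  shows "\<alpha> * nsq n f \<le> Qm M n f"
proof (cases "n = 0")
  case True thus ?thesis by (simp add: nsq_def Qm_def)
next
  case False
  hence n: "n > 0" by simp
  let ?X = "product_topology (\<lambda>_. euclideanreal) {..<n}"
  define K where "K = PiE {..<n} (\<lambda>_. {-1..1::real})"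
  have cK: "compactin ?X K" unfolding K_def by (subst compactin_PiE) auto
  define C where "C = {f \<in> topspace ?X. nsq n f \<in> {1}}"
  have contg: "continuous_map ?X euclideanreal (\<lambda>f. nsq n f)"
    unfolding nsq_def by (intro continuous_intros) auto
  have clC: "closedin ?X C" unfolding C_def
    by (rule closedin_continuous_map_preimage[OF contg]) (simp add: closed_closedin[symmetric])
  have subC: "C \<subseteq> K"
  proof
    fix f assume f: "f \<in> C"
    hence fP: "f \<in> PiE {..<n} (\<lambda>_. UNIV)" and nf: "nsq n f = 1" by (auto simp: C_def)
    have "\<bar>f i\<bar> \<le> 1" if "i < n" for i
    proof -
      have "(f i)^2 \<le> nsq n f" unfolding nsq_def
        by (rule member_le_sum[where f="\<lambda>i. (f i)^2"]) (use that in auto)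
      thus ?thesis using nf abs_square_le_1 by auto
    qed
    thus "f \<in> K" using fP unfolding K_def by (auto simp: PiE_iff abs_le_iff)
  qed
  have cC: "compactin ?X C" by (rule closed_compactin[OF cK subC clC])
  have contq: "continuous_map ?X euclideanreal (\<lambda>f. Qm M n f)"
    unfolding Qm_def by (intro continuous_intros) auto
  have cq: "compact ((\<lambda>f. Qm M n f) ` C)"
    using image_compactin[OF cC contq] by simp
  define e0 where "e0 = (\<lambda>i::nat. if i < n then (if i = 0 then 1 else 0) else (undefined::real))"
  have "nsq n e0 = 1" unfolding nsq_def e0_def using n
    by (simp add: sum.delta' if_distrib[of "\<lambda>x. x^2"] cong: if_cong)
  hence "e0 \<in> C" unfolding C_def by (auto simp: e0_def PiE_iff extensional_def)
  hence "(\<lambda>f. Qm M n f) ` C \<noteq> {}" by auto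
  from compact_attains_inf[OF cq this] obtain u where uC: "u \<in> C"
    and umin: "\<And>f. f \<in> C \<Longrightarrow> Qm M n u \<le> Qm M n f" by auto
  define lam where "lam = Qm M n u"
  have nu: "nsq n u = 1" using uC by (simp add: C_def)
  have H: "lam * nsq n f \<le> Qm M n f" for f
  proof (cases "nsq n f = 0")
    case True
    hence "\<forall>i\<in>{..<n}. (f i)^2 = 0" unfolding nsq_def
      by (subst sum_nonneg_eq_0_iff[symmetric]) auto
    hence "Qm M n f = 0" unfolding Qm_def by auto
    thus ?thesis using True by simp
  next
    case False
    hence pos: "nsq n f > 0" using nsq_nonneg[of n f] by simp
    define c where "c = sqrt (nsq n f)"
    have c: "c > 0" "c^2 = nsq n f" using pos by (auto simp: c_def)
    define f' where "f' = (\<lambda>i. if i < n then f i / c else undefined)"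
    have "nsq n f' = nsq n f / c^2" unfolding nsq_def f'_def
      by (simp add: sum_divide_distrib power_divide)
    hence "nsq n f' = 1" using c pos by simp
    hence "f' \<in> C" unfolding C_def by (auto simp: f'_def PiE_iff extensional_def)
    hence "lam \<le> Qm M n f'" using umin lam_def by auto
    also have "Qm M n f' = Qm M n f / c^2" unfolding Qm_def f'_def
      by (simp add: sum_divide_distrib power2_eq_square)
    finally have "lam \<le> Qm M n f / nsq n f" using c by simp
    thus ?thesis using pos by (simp add: pos_le_divide_eq mult.commute)
  qed
  define w where "w i = (\<Sum>j<n. M$$(i,j) * u j) - lam * u i" for i
  have cross: "(\<Sum>i<n. \<Sum>j<n. w i * M$$(i,j) * u j) = nsq n w + lam * (\<Sum>i<n. u i * w i)"
  proof -
    have "(\<Sum>i<n. \<Sum>j<n. w i * M$$(i,j) * u j) = (\<Sum>i<n. w i * (\<Sum>j<n. M$$(i,j) * u j))"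
      by (simp add: sum_distrib_left mult_ac)
    also have "\<dots> = (\<Sum>i<n. w i * (w i + lam * u i))" by (simp add: w_def)
    also have "\<dots> = nsq n w + lam * (\<Sum>i<n. u i * w i)"
      by (simp add: nsq_def algebra_simps power2_eq_square sum.distrib sum_distrib_left)
    finally show ?thesis .
  qed
  have "0 \<le> 2*t*nsq n w + t^2*(Qm M n w - lam * nsq n w)" for t
  proof -
    have "lam * nsq n (\<lambda>i. u i + t * w i) \<le> Qm M n (\<lambda>i. u i + t * w i)" by (rule H)
    moreover have "Qm M n (\<lambda>i. u i + t * w i) = lam + 2*t*(nsq n w + lam * (\<Sum>i<n. u i * w i)) + t^2 * Qm M n w"
      using Qm_expand[OF sym, where u=u and w=w and t=t] cross lam_def by simp
    moreover have "nsq n (\<lambda>i. u i + t * w i) = 1 + 2*t*(\<Sum>i<n. u i * w i) + t^2 * nsq n w"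
      using nsq_expand[where u=u and w=w and t=t] nu by simp
    ultimately show ?thesis by (simp add: algebra_simps)
  qed
  from quad_zero[OF this nsq_nonneg] have "nsq n w = 0" .
  hence "\<forall>i\<in>{..<n}. (w i)^2 = 0" unfolding nsq_def
    by (subst sum_nonneg_eq_0_iff[symmetric]) auto
  hence eq: "\<And>i. i < n \<Longrightarrow> (\<Sum>j<n. M$$(i,j) * u j) = lam * u i" by (auto simp: w_def)
  have "\<exists>i<n. u i \<noteq> 0"
  proof (rule ccontr)
    assume "\<not> ?thesis" hence "nsq n u = 0" by (simp add: nsq_def)
    with nu show False by simp
  qed
  from ev[OF eq this] have "\<alpha> \<le> lam" .
  hence "\<alpha> * nsq n f \<le> lam * nsq n f" by (rule mult_right_mono[OF _ nsq_nonneg])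
  also have "\<dots> \<le> Qm M n f" by (rule H)
  finally show ?thesis .
qed

definition part :: "nat \<Rightarrow> nat set set \<Rightarrow> bool" where
  "part n Q \<longleftrightarrow> finite Q \<and> (\<forall>S\<in>Q. S \<subseteq> {..<n}) \<and> (\<forall>i<n. \<exists>S\<in>Q. i \<in> S) \<and>
     (\<forall>S\<in>Q. \<forall>T\<in>Q. S \<noteq> T \<longrightarrow> S \<inter> T = {})"

lemma np_part:
  assumes np: "nested_partition n l P" and hl: "h \<le> l"
  shows "part n (P h)"
  using hl
proof (induction h)
  case 0
  have "P 0 = {{0..<n}}" using np by (simp add: nested_partition_def)
  thus ?case by (auto simp: part_def)
next
  case (Suc h)
  hence hl: "h < l" and IH: "part n (P h)" by auto
  from np have "\<forall>h<l. \<exists>m :: nat set \<Rightarrow> nat.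
        (\<forall>S\<in>P h. \<exists>a b. S = {a..<b} \<and> a < m S \<and> m S < b) \<and>
        P (Suc h) = (\<Union>S\<in>P h. {{x\<in>S. x < m S}, {x\<in>S. m S \<le> x}})"
    unfolding nested_partition_def by (rule conjunct2)
  from this[rule_format, OF hl] obtain m :: "nat set \<Rightarrow> nat" where
    eq: "P (Suc h) = (\<Union>S\<in>P h. {{x\<in>S. x < m S}, {x\<in>S. m S \<le> x}})"
    by blast
  from IH have fin: "finite (P h)" and sub: "\<forall>S\<in>P h. S \<subseteq> {..<n}"
    and cov: "\<forall>i<n. \<exists>S\<in>P h. i \<in> S" and dis: "\<forall>S\<in>P h. \<forall>T\<in>P h. S \<noteq> T \<longrightarrow> S \<inter> T = {}"
    unfolding part_def by blast+
  have "finite (P (Suc h))" unfolding eq using fin by auto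
  moreover have "\<forall>S\<in>P (Suc h). S \<subseteq> {..<n}" unfolding eq using sub by auto
  moreover have "\<forall>i<n. \<exists>S\<in>P (Suc h). i \<in> S"
  proof (intro allI impI)
    fix i assume "i < n"
    then obtain S where S: "S \<in> P h" "i \<in> S" using cov by auto
    show "\<exists>S\<in>P (Suc h). i \<in> S"
    proof (cases "i < m S")
      case True thus ?thesis unfolding eq using S by (intro bexI[of _ "{x\<in>S. x < m S}"]) auto
    next
      case False thus ?thesis unfolding eq using S by (intro bexI[of _ "{x\<in>S. m S \<le> x}"]) auto
    qed
  qed
  moreover have "\<forall>S'\<in>P (Suc h). \<forall>T'\<in>P (Suc h). S' \<noteq> T' \<longrightarrow> S' \<inter> T' = {}"
  proof (intro ballI impI)
    fix S' T' assume S': "S' \<in> P (Suc h)" and T': "T' \<in> P (Suc h)" and ne: "S' \<noteq> T'"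
    from S' obtain S where S: "S \<in> P h" "S' = {x\<in>S. x < m S} \<or> S' = {x\<in>S. m S \<le> x}"
      using S' unfolding eq by blast
    from T' obtain T where T: "T \<in> P h" "T' = {x\<in>T. x < m T} \<or> T' = {x\<in>T. m T \<le> x}"
      using T' unfolding eq by blast
    show "S' \<inter> T' = {}"
    proof (cases "S = T")
      case True
      have d: "{x\<in>S. x < m S} \<inter> {x\<in>S. m S \<le> x} = {}" by auto
      from S(2) T(2) show ?thesis unfolding True[symmetric] using ne d by (elim disjE) auto
    next
      case False
      hence "S \<inter> T = {}" using dis S T by auto
      moreover have "S' \<subseteq> S" "T' \<subseteq> T" using S T by auto
      ultimately show ?thesis by auto
    qed
  qed
  ultimately show ?case by (simp add: part_def)
qed

lemma part_sum:
  assumes p: "part n Q" and i: "i < n"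
  shows "(\<Sum>S\<in>Q. if i\<in>S \<and> j\<in>S then c else (0::real)) = (if \<exists>S\<in>Q. i\<in>S \<and> j\<in>S then c else 0)"
proof -
  from p i obtain S0 where S0: "S0 \<in> Q" "i \<in> S0" by (auto simp: part_def)
  have fin: "finite Q" using p by (simp add: part_def)
  have eqv: "(i\<in>S \<and> j\<in>S) = (S = S0 \<and> j \<in> S0)" if "S \<in> Q" for S
    using p S0 that unfolding part_def by blast
  have "(\<Sum>S\<in>Q. if i\<in>S \<and> j\<in>S then c else (0::real)) = (\<Sum>S\<in>Q. if S = S0 then (if j \<in> S0 then c else 0) else 0)"
    by (rule sum.cong) (auto simp: eqv)
  also have "\<dots> = (if j \<in> S0 then c else 0)" using fin S0 by (simp add: sum.delta')
  also have "(\<exists>S\<in>Q. i\<in>S \<and> j\<in>S) = (j \<in> S0)" using eqv S0 by blast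
  ultimately show ?thesis by simp
qed

lemma blk_carrier: "A \<in> carrier_mat n n \<Longrightarrow> blkdiag P h A \<in> carrier_mat n n"
  by (auto simp: blkdiag_def)

lemma blk_entry: "A \<in> carrier_mat n n \<Longrightarrow> i < n \<Longrightarrow> j < n \<Longrightarrow>
   blkdiag P h A $$ (i,j) = (if \<exists>S\<in>P h. i \<in> S \<and> j \<in> S then A $$ (i,j) else 0)"
  by (auto simp: blkdiag_def)

lemma blk_Qm:
  assumes p: "part n (P h)" and A: "A \<in> carrier_mat n n"
  shows "Qm (blkdiag P h A) n f = (\<Sum>S\<in>P h. Qm A n (\<lambda>i. if i \<in> S then f i else 0))"
proof -
  have "(\<Sum>S\<in>P h. Qm A n (\<lambda>i. if i \<in> S then f i else 0))
      = (\<Sum>S\<in>P h. \<Sum>i<n. \<Sum>j<n. if i\<in>S \<and> j\<in>S then f i * A$$(i,j) * f j else 0)"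
    unfolding Qm_def by (intro sum.cong refl) auto
  also have "\<dots> = (\<Sum>i<n. \<Sum>j<n. \<Sum>S\<in>P h. if i\<in>S \<and> j\<in>S then f i * A$$(i,j) * f j else 0)"
    by (subst sum.swap) (intro sum.cong refl, subst sum.swap, rule refl)
  also have "\<dots> = (\<Sum>i<n. \<Sum>j<n. if \<exists>S\<in>P h. i\<in>S \<and> j\<in>S then f i * A$$(i,j) * f j else 0)"
    apply (intro sum.cong refl)
    apply (rule part_sum[OF p])
    by simp
  also have "\<dots> = Qm (blkdiag P h A) n f"
    unfolding Qm_def by (intro sum.cong refl) (auto simp: blk_entry[OF A])
  finally show ?thesis by simp
qed

lemma blk_nsq:
  assumes p: "part n Q"
  shows "nsq n f = (\<Sum>S\<in>Q. nsq n (\<lambda>i. if i \<in> S then f i else 0))"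
proof -
  have "(\<Sum>S\<in>Q. nsq n (\<lambda>i. if i \<in> S then f i else 0))
      = (\<Sum>S\<in>Q. \<Sum>i<n. if i\<in>S \<and> i\<in>S then (f i)^2 else 0)"
    unfolding nsq_def by (intro sum.cong refl) auto
  also have "\<dots> = (\<Sum>i<n. \<Sum>S\<in>Q. if i\<in>S \<and> i\<in>S then (f i)^2 else 0)"
    by (rule sum.swap)
  also have "\<dots> = (\<Sum>i<n. (f i)^2)"
  proof (intro sum.cong refl)
    fix i assume "i \<in> {..<n}"
    hence i: "i < n" by simp
    have "(\<Sum>S\<in>Q. if i\<in>S \<and> i\<in>S then (f i)^2 else 0) = (if \<exists>S\<in>Q. i\<in>S \<and> i\<in>S then (f i)^2 else 0)"
      by (rule part_sum[OF p i])
    also have "\<dots> = (f i)^2" using p i by (auto simp: part_def)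
    finally show "(\<Sum>S\<in>Q. if i\<in>S \<and> i\<in>S then (f i)^2 else 0) = (f i)^2" .
  qed
  finally show ?thesis by (simp add: nsq_def)
qed

lemma blk_bounds:
  assumes p: "part n (P h)" and A: "A \<in> carrier_mat n n"
    and bd: "\<And>f. \<alpha> * nsq n f \<le> Qm A n f \<and> Qm A n f \<le> \<beta> * nsq n f"
  shows "\<alpha> * nsq n f \<le> Qm (blkdiag P h A) n f \<and> Qm (blkdiag P h A) n f \<le> \<beta> * nsq n f"
proof -
  let ?g = "\<lambda>S i. if i \<in> S then f i else 0"
  have "\<alpha> * nsq n f = (\<Sum>S\<in>P h. \<alpha> * nsq n (?g S))"
    by (subst blk_nsq[OF p]) (simp add: sum_distrib_left)
  also have "\<dots> \<le> (\<Sum>S\<in>P h. Qm A n (?g S))" by (intro sum_mono) (use bd in auto)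
  finally have 1: "\<alpha> * nsq n f \<le> Qm (blkdiag P h A) n f" by (simp add: blk_Qm[where P=P and h=h, OF p A])
  have "(\<Sum>S\<in>P h. Qm A n (?g S)) \<le> (\<Sum>S\<in>P h. \<beta> * nsq n (?g S))" by (intro sum_mono) (use bd in auto)
  also have "\<dots> = \<beta> * nsq n f"
    by (subst blk_nsq[OF p]) (simp add: sum_distrib_left)
  finally have 2: "Qm (blkdiag P h A) n f \<le> \<beta> * nsq n f" by (simp add: blk_Qm[where P=P and h=h, OF p A])
  from 1 2 show ?thesis by simp
qed

lemma ev_of:
  fixes A :: "real mat"
  assumes A: "A \<in> carrier_mat n n"
    and e: "\<And>i. i<n \<Longrightarrow> (\<Sum>j<n. A$$(i,j) * u j) = lam * u i" and nz: "\<exists>i<n. u i \<noteq> 0"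
  shows "eigenvalue A lam"
proof -
  define v where "v = vec n u"
  have "A *\<^sub>v v = lam \<cdot>\<^sub>v v"
  proof (rule eq_vecI)
    fix i assume "i < dim_vec (lam \<cdot>\<^sub>v v)"
    hence i: "i < n" by (simp add: v_def)
    have "(A *\<^sub>v v) $ i = (\<Sum>j<n. A$$(i,j) * u j)"
      using A i by (simp add: v_def scalar_prod_def atLeast0LessThan)
    also have "\<dots> = (lam \<cdot>\<^sub>v v) $ i" using e[OF i] i by (simp add: v_def)
    finally show "(A *\<^sub>v v) $ i = (lam \<cdot>\<^sub>v v) $ i" .
  qed (use A in \<open>simp add: v_def\<close>)
  moreover have "v \<noteq> 0\<^sub>v n" using nz by (auto simp: v_def vec_eq_iff)
  ultimately have "eigenvector A v lam" using A by (simp add: eigenvector_def v_def)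
  thus ?thesis by (auto simp: eigenvalue_def)
qed

lemma spec_bounds:
  fixes A :: "real mat"
  assumes A: "A \<in> carrier_mat n n" and sy: "A\<^sup>T = A" and sp: "spec_in A \<alpha> \<beta>"
  shows "\<alpha> * nsq n f \<le> Qm A n f \<and> Qm A n f \<le> \<beta> * nsq n f"
proof -
  have sym: "A$$(i,j) = A$$(j,i)" if "i<n" "j<n" for i j
  proof -
    have "A$$(i,j) = A\<^sup>T $$ (i,j)" using sy by simp
    also have "\<dots> = A$$(j,i)" using A that by simp
    finally show ?thesis .
  qed
  have 1: "\<alpha> * nsq n f \<le> Qm A n f"
  proof (rule min_eig)
    show "A $$ (i, j) = A $$ (j, i)" if "i<n" "j<n" for i j using sym that .
    fix lam u assume e: "\<And>i. i<n \<Longrightarrow> (\<Sum>j<n. A$$(i,j) * u j) = lam * u i" and nz: "\<exists>i<n. u i \<noteq> 0"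
    from ev_of[OF A e nz] sp show "\<alpha> \<le> lam" by (auto simp: spec_in_def)
  qed
  have mA: "- A \<in> carrier_mat n n" using A by simp
  have 2: "(-\<beta>) * nsq n f \<le> Qm (- A) n f"
  proof (rule min_eig)
    show "(-A) $$ (i, j) = (-A) $$ (j, i)" if "i<n" "j<n" for i j
    proof -
      have "A $$ (i, j) = A $$ (j, i)" by (rule sym[OF that])
      thus ?thesis using that A by simp
    qed
    fix lam u assume e: "\<And>i. i<n \<Longrightarrow> (\<Sum>j<n. (-A)$$(i,j) * u j) = lam * u i" and nz: "\<exists>i<n. u i \<noteq> 0"
    have e': "(\<Sum>j<n. A$$(i,j) * u j) = (-lam) * u i" if "i < n" for i
    proof -
      have "(\<Sum>j<n. (-A)$$(i,j) * u j) = - (\<Sum>j<n. A$$(i,j) * u j)"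
        using A that by (simp add: sum_negf[symmetric])
      thus ?thesis using e[OF that] by simp
    qed
    from ev_of[OF A e' nz] sp show "-\<beta> \<le> lam" by (auto simp: spec_in_def)
  qed
  have "Qm (- A) n f = - Qm A n f" unfolding Qm_def using A
    by (simp add: sum_negf[symmetric])
  with 1 2 show ?thesis by simp
qed

lemma op_bound:
  fixes M :: "real mat"
  assumes sym: "\<And>i j. i<n \<Longrightarrow> j<n \<Longrightarrow> M$$(i,j) = M$$(j,i)"
    and bd: "\<And>f. \<bar>Qm M n f\<bar> \<le> c * nsq n f"
  shows "nsq n (\<lambda>i. \<Sum>j<n. M$$(i,j) * f j) \<le> c^2 * nsq n f"
proof -
  define g where "g i = (\<Sum>j<n. M$$(i,j) * f j)" for i
  define G where "G = nsq n g"
  define F where "F = nsq n f"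
  define S where "S = (\<Sum>i<n. f i * g i)"
  have cr: "(\<Sum>i<n. \<Sum>j<n. g i * M$$(i,j) * f j) = G"
  proof -
    have "(\<Sum>i<n. \<Sum>j<n. g i * M$$(i,j) * f j) = (\<Sum>i<n. g i * g i)"
      by (simp add: g_def sum_distrib_left mult_ac)
    thus ?thesis by (simp add: G_def nsq_def power2_eq_square)
  qed
  have key: "2*t*G \<le> c*F + c*t^2*G" for t
  proof -
    have p: "Qm M n (\<lambda>i. f i + t * g i) = Qm M n f + 2*t*G + t^2 * Qm M n g"
      using Qm_expand[OF sym, where u=f and w=g and t=t] cr by simp
    have m: "Qm M n (\<lambda>i. f i + (-t) * g i) = Qm M n f - 2*t*G + t^2 * Qm M n g"
      using Qm_expand[OF sym, where u=f and w=g and t="-t"] cr by simp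
    have np: "nsq n (\<lambda>i. f i + t * g i) = F + 2*t*S + t^2*G"
      using nsq_expand[where u=f and w=g and t=t] by (simp add: F_def G_def S_def)
    have nm: "nsq n (\<lambda>i. f i + (-t) * g i) = F - 2*t*S + t^2*G"
      using nsq_expand[where u=f and w=g and t="-t"] by (simp add: F_def G_def S_def)
    have "4*t*G = Qm M n (\<lambda>i. f i + t * g i) - Qm M n (\<lambda>i. f i + (-t) * g i)"
      using p m by simp
    also have "\<dots> \<le> \<bar>Qm M n (\<lambda>i. f i + t * g i)\<bar> + \<bar>Qm M n (\<lambda>i. f i + (-t) * g i)\<bar>" by simp
    also have "\<dots> \<le> c * nsq n (\<lambda>i. f i + t * g i) + c * nsq n (\<lambda>i. f i + (-t) * g i)"
      by (intro add_mono bd)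
    also have "\<dots> = 2 * (c*F + c*t^2*G)" unfolding np nm by (simp add: algebra_simps)
    finally show ?thesis by simp
  qed
  have G0: "G \<ge> 0" "F \<ge> 0" by (auto simp: G_def F_def nsq_nonneg)
  have "G \<le> c^2 * F"
  proof (cases "G = 0")
    case True thus ?thesis using G0 by simp
  next
    case False
    hence Gp: "G > 0" using G0 by simp
    have "2*G \<le> c*(F+G)" using key[of 1] by (simp add: algebra_simps)
    hence cp: "c > 0" using Gp G0 by (smt (verit) mult_nonpos_nonneg)
    have "2*(1/c)*G \<le> c*F + c*(1/c)^2*G" by (rule key)
    hence "2*G/c \<le> c*F + G/c" using cp by (simp add: power2_eq_square)
    hence "G/c \<le> c*F" by simp
    thus ?thesis using cp by (simp add: divide_le_eq power2_eq_square mult_ac)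
  qed
  moreover have "g = (\<lambda>i. \<Sum>j<n. M$$(i,j) * f j)" by (rule ext) (simp add: g_def)
  ultimately show ?thesis by (simp add: G_def F_def)
qed

lemma frob_nonneg: "0 \<le> frob M" by (simp add: frob_def sum_nonneg)

lemma frob_L2: "frob M = L2_set (\<lambda>p. M $$ p) ({..<dim_row M} \<times> {..<dim_col M})"
  unfolding frob_def L2_set_def by (simp add: sum.cartesian_product split_def)

lemma frob_tri:
  assumes X: "X \<in> carrier_mat r c" and Y: "Y \<in> carrier_mat r c" and Z: "Z \<in> carrier_mat r c"
    and e: "\<And>i j. i<r \<Longrightarrow> j<c \<Longrightarrow> \<bar>Z$$(i,j)\<bar> \<le> \<bar>X$$(i,j)\<bar> + \<bar>Y$$(i,j)\<bar>"
  shows "frob Z \<le> frob X + frob Y"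
proof -
  let ?I = "{..<r} \<times> {..<c}"
  have ab: "L2_set (\<lambda>p. \<bar>f p\<bar>) A = L2_set f A" for f :: "nat\<times>nat \<Rightarrow> real" and A
    unfolding L2_set_def by simp
  have "frob Z = L2_set (\<lambda>p. \<bar>Z $$ p\<bar>) ?I" using Z by (simp add: frob_L2 ab)
  also have "\<dots> \<le> L2_set (\<lambda>p. \<bar>X $$ p\<bar> + \<bar>Y $$ p\<bar>) ?I"
    by (rule L2_set_mono) (auto intro: e)
  also have "\<dots> \<le> L2_set (\<lambda>p. \<bar>X $$ p\<bar>) ?I + L2_set (\<lambda>p. \<bar>Y $$ p\<bar>) ?I"
    by (rule L2_set_triangle_ineq)
  also have "\<dots> = frob X + frob Y" using X Y by (simp add: frob_L2 ab)
  finally show ?thesis .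
qed

lemma mult_entry:
  "A \<in> carrier_mat r k \<Longrightarrow> B \<in> carrier_mat k c \<Longrightarrow> i < r \<Longrightarrow> j < c \<Longrightarrow>
   (A * B) $$ (i,j) = (\<Sum>l<k. A$$(i,l) * B$$(l,j))"
  by (auto simp: scalar_prod_def atLeast0LessThan intro!: sum.cong)

lemma frob_sq_le:
  assumes "(\<Sum>i<dim_row Z. \<Sum>j<dim_col Z. (Z$$(i,j))^2) \<le> k^2 * (\<Sum>i<dim_row X. \<Sum>j<dim_col X. (X$$(i,j))^2)"
    and "k \<ge> 0"
  shows "frob Z \<le> k * frob X"
proof -
  have "frob Z \<le> sqrt (k^2 * (\<Sum>i<dim_row X. \<Sum>j<dim_col X. (X$$(i,j))^2))"
    unfolding frob_def using assms(1) by (rule real_sqrt_le_mono)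
  also have "\<dots> = k * frob X" using assms(2) by (simp add: frob_def real_sqrt_mult)
  finally show ?thesis .
qed

lemma frob_mult_left:
  fixes M X :: "real mat"
  assumes M: "M \<in> carrier_mat n1 n1" and X: "X \<in> carrier_mat n1 n2"
    and sym: "\<And>i j. i<n1 \<Longrightarrow> j<n1 \<Longrightarrow> M$$(i,j) = M$$(j,i)"
    and bd: "\<And>f. \<bar>Qm M n1 f\<bar> \<le> c * nsq n1 f" and c: "c \<ge> 0"
  shows "frob (M * X) \<le> c * frob X"
proof (rule frob_sq_le[OF _ c])
  have "(\<Sum>i<dim_row (M*X). \<Sum>j<dim_col (M*X). ((M*X)$$(i,j))^2)
      = (\<Sum>i<n1. \<Sum>j<n2. ((M*X)$$(i,j))^2)" using M X by simp
  also have "\<dots> = (\<Sum>i<n1. \<Sum>j<n2. (\<Sum>k<n1. M$$(i,k) * X$$(k,j))^2)"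
  proof (intro sum.cong refl)
    fix i j assume "i \<in> {..<n1}" "j \<in> {..<n2}"
    hence ij: "i < n1" "j < n2" by auto
    show "((M*X)$$(i,j))^2 = (\<Sum>k<n1. M$$(i,k) * X$$(k,j))^2" by (simp only: mult_entry[OF M X ij])
  qed
  also have "\<dots> = (\<Sum>j<n2. nsq n1 (\<lambda>i. \<Sum>k<n1. M$$(i,k) * X$$(k,j)))"
    unfolding nsq_def by (rule sum.swap)
  also have "\<dots> \<le> (\<Sum>j<n2. c^2 * nsq n1 (\<lambda>k. X$$(k,j)))"
    by (intro sum_mono op_bound[OF sym bd])
  also have "\<dots> = c^2 * (\<Sum>i<dim_row X. \<Sum>j<dim_col X. (X$$(i,j))^2)"
    using X unfolding nsq_def by (simp add: sum_distrib_left) (rule sum.swap)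
  finally show "(\<Sum>i<dim_row (M*X). \<Sum>j<dim_col (M*X). ((M*X)$$(i,j))^2) \<le> c^2 * (\<Sum>i<dim_row X. \<Sum>j<dim_col X. (X$$(i,j))^2)" .
qed

lemma frob_mult_right:
  fixes M X :: "real mat"
  assumes M: "M \<in> carrier_mat n2 n2" and X: "X \<in> carrier_mat n1 n2"
    and sym: "\<And>i j. i<n2 \<Longrightarrow> j<n2 \<Longrightarrow> M$$(i,j) = M$$(j,i)"
    and bd: "\<And>f. \<bar>Qm M n2 f\<bar> \<le> c * nsq n2 f" and c: "c \<ge> 0"
  shows "frob (X * M) \<le> c * frob X"
proof (rule frob_sq_le[OF _ c])
  have "(\<Sum>i<dim_row (X*M). \<Sum>j<dim_col (X*M). ((X*M)$$(i,j))^2)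
      = (\<Sum>i<n1. \<Sum>j<n2. ((X*M)$$(i,j))^2)" using M X by simp
  also have "\<dots> = (\<Sum>i<n1. \<Sum>j<n2. (\<Sum>k<n2. M$$(j,k) * X$$(i,k))^2)"
  proof (intro sum.cong refl)
    fix i j assume "i \<in> {..<n1}" "j \<in> {..<n2}"
    hence ij: "i < n1" "j < n2" by auto
    have "(X*M)$$(i,j) = (\<Sum>k<n2. X$$(i,k) * M$$(k,j))" by (rule mult_entry[OF X M ij])
    also have "\<dots> = (\<Sum>k<n2. M$$(j,k) * X$$(i,k))"
    proof (rule sum.cong[OF refl])
      fix k assume "k \<in> {..<n2}"
      hence "M$$(k,j) = M$$(j,k)" using sym ij by simp
      thus "X$$(i,k) * M$$(k,j) = M$$(j,k) * X$$(i,k)" by simp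
    qed
    finally show "((X*M)$$(i,j))^2 = (\<Sum>k<n2. M$$(j,k) * X$$(i,k))^2" by simp
  qed
  also have "\<dots> = (\<Sum>i<n1. nsq n2 (\<lambda>j. \<Sum>k<n2. M$$(j,k) * X$$(i,k)))"
    unfolding nsq_def by simp
  also have "\<dots> \<le> (\<Sum>i<n1. c^2 * nsq n2 (\<lambda>k. X$$(i,k)))"
    by (intro sum_mono op_bound[OF sym bd])
  also have "\<dots> = c^2 * (\<Sum>i<dim_row X. \<Sum>j<dim_col X. (X$$(i,j))^2)"
    using X unfolding nsq_def by (simp add: sum_distrib_left)
  finally show "(\<Sum>i<dim_row (X*M). \<Sum>j<dim_col (X*M). ((X*M)$$(i,j))^2) \<le> c^2 * (\<Sum>i<dim_row X. \<Sum>j<dim_col X. (X$$(i,j))^2)" .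
qed

lemma frob_sq: "(frob M)^2 = (\<Sum>i<dim_row M. \<Sum>j<dim_col M. (M$$(i,j))^2)"
  unfolding frob_def by (simp add: sum_nonneg)

lemma frob_ip:
  assumes X: "X \<in> carrier_mat r c" and Y: "Y \<in> carrier_mat r c"
  shows "(\<Sum>i<r. \<Sum>j<c. X$$(i,j) * Y$$(i,j)) \<le> frob X * frob Y"
proof -
  let ?I = "{..<r} \<times> {..<c}"
  have "(\<Sum>i<r. \<Sum>j<c. X$$(i,j) * Y$$(i,j)) = (\<Sum>p\<in>?I. X$$p * Y$$p)"
    by (simp add: sum.cartesian_product split_def)
  also have "\<dots> \<le> (\<Sum>p\<in>?I. \<bar>X$$p\<bar> * \<bar>Y$$p\<bar>)"
    by (intro sum_mono) (simp add: abs_mult[symmetric])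
  also have "\<dots> \<le> L2_set (\<lambda>p. X$$p) ?I * L2_set (\<lambda>p. Y$$p) ?I" by (rule L2_set_mult_ineq)
  also have "\<dots> = frob X * frob Y" using X Y by (simp add: frob_L2)
  finally show ?thesis .
qed

lemma sylv_lower:
  fixes A1 A2 X :: "real mat"
  assumes A1: "A1 \<in> carrier_mat n1 n1" and A2: "A2 \<in> carrier_mat n2 n2" and X: "X \<in> carrier_mat n1 n2"
    and lb1: "\<And>f. \<alpha>1 * nsq n1 f \<le> Qm A1 n1 f" and lb2: "\<And>f. \<alpha>2 * nsq n2 f \<le> Qm A2 n2 f"
    and a: "\<alpha>1 + \<alpha>2 > 0"
  shows "(\<alpha>1 + \<alpha>2) * frob X \<le> frob (A1 * X + X * A2)"
proof -
  define Y where "Y = A1 * X + X * A2"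
  have Y: "Y \<in> carrier_mat n1 n2" using A1 A2 X by (simp add: Y_def)
  define F2 where "F2 = (\<Sum>i<n1. \<Sum>j<n2. (X$$(i,j))^2)"
  have F2: "F2 = (frob X)^2" using X by (simp add: frob_sq F2_def)
  have Ye: "Y$$(i,j) = (\<Sum>k<n1. A1$$(i,k) * X$$(k,j)) + (\<Sum>k<n2. X$$(i,k) * A2$$(k,j))"
    if "i < n1" "j < n2" for i j
    using that A1 A2 X by (simp add: Y_def mult_entry[OF A1 X that] mult_entry[OF X A2 that])
  have "(\<Sum>i<n1. \<Sum>j<n2. X$$(i,j) * Y$$(i,j)) =
     (\<Sum>i<n1. \<Sum>j<n2. X$$(i,j) * (\<Sum>k<n1. A1$$(i,k) * X$$(k,j))) +
     (\<Sum>i<n1. \<Sum>j<n2. X$$(i,j) * (\<Sum>k<n2. X$$(i,k) * A2$$(k,j)))"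
    by (simp add: Ye sum.distrib distrib_left)
  also have "(\<Sum>i<n1. \<Sum>j<n2. X$$(i,j) * (\<Sum>k<n1. A1$$(i,k) * X$$(k,j))) = (\<Sum>j<n2. Qm A1 n1 (\<lambda>i. X$$(i,j)))"
    unfolding Qm_def by (subst sum.swap) (simp add: sum_distrib_left mult_ac)
  also have "(\<Sum>i<n1. \<Sum>j<n2. X$$(i,j) * (\<Sum>k<n2. X$$(i,k) * A2$$(k,j))) = (\<Sum>i<n1. Qm A2 n2 (\<lambda>j. X$$(i,j)))"
  proof (intro sum.cong refl)
    fix i assume "i \<in> {..<n1}"
    have "Qm A2 n2 (\<lambda>j. X$$(i,j)) = (\<Sum>b<n2. \<Sum>a<n2. X$$(i,a) * A2$$(a,b) * X$$(i,b))"
      unfolding Qm_def by (rule sum.swap)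
    thus "(\<Sum>j<n2. X$$(i,j) * (\<Sum>k<n2. X$$(i,k) * A2$$(k,j))) = Qm A2 n2 (\<lambda>j. X$$(i,j))"
      by (simp add: sum_distrib_left mult_ac)
  qed
  finally have ipeq: "(\<Sum>i<n1. \<Sum>j<n2. X$$(i,j) * Y$$(i,j)) = (\<Sum>j<n2. Qm A1 n1 (\<lambda>i. X$$(i,j))) + (\<Sum>i<n1. Qm A2 n2 (\<lambda>j. X$$(i,j)))" .
  have "\<alpha>1 * F2 = (\<Sum>j<n2. \<alpha>1 * nsq n1 (\<lambda>i. X$$(i,j)))"
    unfolding F2_def nsq_def by (subst sum.swap) (simp add: sum_distrib_left)
  also have "\<dots> \<le> (\<Sum>j<n2. Qm A1 n1 (\<lambda>i. X$$(i,j)))" by (intro sum_mono lb1)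
  finally have t1: "\<alpha>1 * F2 \<le> (\<Sum>j<n2. Qm A1 n1 (\<lambda>i. X$$(i,j)))" .
  have "\<alpha>2 * F2 = (\<Sum>i<n1. \<alpha>2 * nsq n2 (\<lambda>j. X$$(i,j)))"
    unfolding F2_def nsq_def by (simp add: sum_distrib_left)
  also have "\<dots> \<le> (\<Sum>i<n1. Qm A2 n2 (\<lambda>j. X$$(i,j)))" by (intro sum_mono lb2)
  finally have t2: "\<alpha>2 * F2 \<le> (\<Sum>i<n1. Qm A2 n2 (\<lambda>j. X$$(i,j)))" .
  have "(\<alpha>1 + \<alpha>2) * (frob X)^2 \<le> frob X * frob Y"
    using t1 t2 ipeq frob_ip[OF X Y] unfolding F2 by (simp add: algebra_simps)
  hence "(\<alpha>1 + \<alpha>2) * frob X \<le> frob Y"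
  proof (cases "frob X = 0")
    case True thus ?thesis by (simp add: frob_nonneg)
  next
    case False
    hence p: "frob X > 0" using frob_nonneg[of X] by simp
    assume h: "(\<alpha>1 + \<alpha>2) * (frob X)^2 \<le> frob X * frob Y"
    hence "frob X * ((\<alpha>1 + \<alpha>2) * frob X) \<le> frob X * frob Y" by (simp add: power2_eq_square mult_ac)
    thus ?thesis using p by simp
  qed
  thus ?thesis by (simp add: Y_def)
qed

lemma geom_pow: "(1 + x)^n - 1 = (x::real) * (\<Sum>k<n. (1+x)^k)"
  by (induction n) (simp_all add: algebra_simps)

lemma num_small:
  fixes l :: nat
  assumes "1 \<le> l" "l \<le> 7"
  shows "(\<Sum>k<l+1. (1 + 2 / real l)^k) \<le> (real l + 1)^2"
proof -
  have "l = 1 \<or> l = 2 \<or> l = 3 \<or> l = 4 \<or> l = 5 \<or> l = 6 \<or> l = 7" using assms by auto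
  thus ?thesis by (elim disjE) (simp_all add: numeral_eq_Suc)
qed

lemma numeric:
  fixes x :: real and l :: nat
  assumes x: "0 \<le> x" and lx: "real l * x < 2"
  shows "(1+x)^(l+1) - 1 \<le> (real l + 1)^2 * x"
proof -
  have S: "(\<Sum>k<l+1. (1+x)^k) \<le> (real l + 1)^2"
  proof (cases "l = 0")
    case True thus ?thesis by simp
  next
    case False
    show ?thesis
    proof (cases "l \<le> 7")
      case True
      have xl: "x \<le> 2 / real l" using lx False by (simp add: field_simps)
      have "(\<Sum>k<l+1. (1+x)^k) \<le> (\<Sum>k<l+1. (1 + 2 / real l)^k)"
        by (intro sum_mono power_mono) (use xl x in auto)
      also have "\<dots> \<le> (real l + 1)^2" using num_small[of l] True False by simp
      finally show ?thesis .
    next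
      case False
      have "(1+x)^l \<le> (exp x)^l" by (intro power_mono) (use x in auto)
      also have "\<dots> = exp (real l * x)" by (simp add: exp_of_nat_mult)
      also have "\<dots> \<le> exp 2" using lx by simp
      also have "exp (2::real) = exp 1 * exp 1" by (simp add: exp_add[symmetric])
      also have "\<dots> \<le> 3 * 3" using exp_le by (intro mult_mono) auto
      finally have e: "(1+x)^l \<le> real l + 1" using False by simp
      have "(\<Sum>k<l+1. (1+x)^k) \<le> (\<Sum>k<l+1. (1+x)^l)"
        by (intro sum_mono power_increasing) (use x in auto)
      also have "\<dots> = (real l + 1) * (1+x)^l" by simp
      also have "\<dots> \<le> (real l + 1) * (real l + 1)" by (intro mult_left_mono e) auto
      finally show ?thesis by (simp add: power2_eq_square)
    qed
  qed
  have "(1+x)^(l+1) - 1 = x * (\<Sum>k<l+1. (1+x)^k)" by (rule geom_pow)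
  also have "\<dots> \<le> x * (real l + 1)^2" by (intro mult_left_mono S x)
  finally show ?thesis by (simp add: mult.commute)
qed


lemma Qm_minus:
  assumes "M \<in> carrier_mat n n" "N \<in> carrier_mat n n"
  shows "Qm (M - N) n f = Qm M n f - Qm N n f"
  unfolding Qm_def using assms by (simp add: sum_subtractf[symmetric] algebra_simps)

lemma key_id:
  fixes a a' bb bb' d x B :: "real mat"
  assumes a: "a \<in> carrier_mat n1 n1" and a': "a' \<in> carrier_mat n1 n1"
    and bb: "bb \<in> carrier_mat n2 n2" and bb': "bb' \<in> carrier_mat n2 n2"
    and d: "d \<in> carrier_mat n1 n2" and x: "x \<in> carrier_mat n1 n2" and B: "B \<in> carrier_mat n1 n2"
  shows "a * (d + x) + (d + x) * bb - B
    = (a * d + d * bb - (- ((a - a') * x) - x * (bb - bb'))) + (a' * x + x * bb' - B)"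
proof -
  have 1: "a*(d+x) = a*d + a*x" by (rule mult_add_distrib_mat[OF a d x])
  have 2: "(d+x)*bb = d*bb + x*bb" by (rule add_mult_distrib_mat[OF d x bb])
  have 3: "(a - a')*x = a*x - a'*x" by (rule minus_mult_distrib_mat[OF a a' x])
  have 4: "x*(bb - bb') = x*bb - x*bb'" by (rule mult_minus_distrib_mat[OF x bb bb'])
  have dims: "dim_row a = n1" "dim_col a = n1" "dim_row a' = n1" "dim_col a' = n1"
    "dim_row bb = n2" "dim_col bb = n2" "dim_row bb' = n2" "dim_col bb' = n2"
    "dim_row d = n1" "dim_col d = n2" "dim_row x = n1" "dim_col x = n2" "dim_row B = n1" "dim_col B = n2"
    using assms by auto
  show ?thesis unfolding 1 2 3 4 by (rule eq_matI) (simp_all add: dims)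
qed

lemma foldr_carrier:
  "set xs \<subseteq> carrier_mat r c \<Longrightarrow> foldr (+) xs (0\<^sub>m r c) \<in> carrier_mat r c"
  by (induction xs) auto

lemma frob_dim0: "dim_row M = 0 \<or> dim_col M = 0 \<Longrightarrow> frob M = 0"
  by (auto simp: frob_def)

theorem lemma3p2:
  fixes n1 n2 l :: nat
    and P1 P2 :: "nat \<Rightarrow> nat set set"
    and A1 A2 B Xl :: "real mat"
    and dX :: "nat \<Rightarrow> real mat"
    and \<alpha>1 \<beta>1 \<alpha>2 \<beta>2 \<epsilon> :: real
  assumes P1: "nested_partition n1 l P1"
    and P2: "nested_partition n2 l P2"
    and A1: "spd n1 A1" and A2: "spd n2 A2"
    and \<alpha>1: "0 < \<alpha>1" and \<alpha>2: "0 < \<alpha>2"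
    and spec1: "spec_in A1 \<alpha>1 \<beta>1" and spec2: "spec_in A2 \<alpha>2 \<beta>2"
    and B: "B \<in> carrier_mat n1 n2"
    and Xl: "Xl \<in> carrier_mat n1 n2"
    and dX: "\<And>h. h < l \<Longrightarrow> dX h \<in> carrier_mat n1 n2"
    and Rl: "frob (blkdiag P1 l A1 * Xl + Xl * blkdiag P2 l A2 - B) \<le> \<epsilon> * frob B"
    and Rh: "\<And>h. h < l \<Longrightarrow>
       (let Xh1 = Xl + foldr (+) (map dX [Suc h..<l]) (0\<^sub>m n1 n2);
            Xi = - ((blkdiag P1 h A1 - blkdiag P1 (Suc h) A1) * Xh1)
                 - Xh1 * (blkdiag P2 h A2 - blkdiag P2 (Suc h) A2)
        in frob (blkdiag P1 h A1 * dX h + dX h * blkdiag P2 h A2 - Xi) \<le> \<epsilon> * frob Xi)"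
    and small: "real l * ((\<beta>1 + \<beta>2) / (\<alpha>1 + \<alpha>2)) * \<epsilon> < 2"
  shows "frob (A1 * (Xl + foldr (+) (map dX [0..<l]) (0\<^sub>m n1 n2)) + (Xl + foldr (+) (map dX [0..<l]) (0\<^sub>m n1 n2)) * A2 - B)
           \<le> (real l + 1)^2 * ((\<beta>1 + \<beta>2) / (\<alpha>1 + \<alpha>2)) * \<epsilon> * frob B"
proof -
  from A1 have A1c: "A1 \<in> carrier_mat n1 n1" and A1s: "A1\<^sup>T = A1" by (auto simp: spd_def)
  from A2 have A2c: "A2 \<in> carrier_mat n2 n2" and A2s: "A2\<^sup>T = A2" by (auto simp: spd_def)
  define Xs where "Xs = (\<lambda>h. Xl + foldr (+) (map dX [h..<l]) (0\<^sub>m n1 n2))"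
  have Xsc: "Xs h \<in> carrier_mat n1 n2" for h
    unfolding Xs_def using Xl dX by (intro add_carrier_mat foldr_carrier) auto
  show ?thesis
  proof (cases "n1 = 0 \<or> n2 = 0")
    case True
    have "frob B = 0" using B True by (intro frob_dim0) auto
    moreover have "frob (A1 * Xs 0 + Xs 0 * A2 - B) = 0" using B True by (intro frob_dim0) auto
    ultimately show ?thesis by (simp add: Xs_def)
  next
    case False
    hence n1: "n1 > 0" and n2: "n2 > 0" by auto
    define a where "a = (\<lambda>h. blkdiag P1 h A1)"
    define b where "b = (\<lambda>h. blkdiag P2 h A2)"
    define r where "r = (\<lambda>h. a h * Xs h + Xs h * b h - B)"
    define Xi where "Xi = (\<lambda>h. - ((a h - a (Suc h)) * Xs (Suc h)) - Xs (Suc h) * (b h - b (Suc h)))"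
    define \<kappa> where "\<kappa> = (\<beta>1 + \<beta>2) / (\<alpha>1 + \<alpha>2)"
    have ac: "a h \<in> carrier_mat n1 n1" for h unfolding a_def by (rule blk_carrier[OF A1c])
    have bc: "b h \<in> carrier_mat n2 n2" for h unfolding b_def by (rule blk_carrier[OF A2c])
    have rc: "r h \<in> carrier_mat n1 n2" for h unfolding r_def using ac bc Xsc B by auto
    have Xic: "Xi h \<in> carrier_mat n1 n2" for h unfolding Xi_def
      by (rule minus_carrier_mat, rule mult_carrier_mat[OF Xsc minus_carrier_mat[OF bc]])
    have Xs_step: "Xs h = dX h + Xs (Suc h)" if h: "h < l" for h
    proof -
      have u: "[h..<l] = h # [Suc h..<l]" using h by (rule upt_conv_Cons)
      define F where "F = foldr (+) (map dX [Suc h..<l]) (0\<^sub>m n1 n2)"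
      have Fc: "F \<in> carrier_mat n1 n2" unfolding F_def using dX by (intro foldr_carrier) auto
      have "Xs h = Xl + (dX h + F)" unfolding Xs_def F_def u by simp
      also have "\<dots> = dX h + (Xl + F)" by (rule eq_matI) (use Xl dX[OF h] Fc in auto)
      finally show ?thesis unfolding Xs_def F_def by simp
    qed
    have Xs_l: "Xs l = Xl" unfolding Xs_def using Xl by simp
    have P10: "P1 0 = {{0..<n1}}" using P1 by (simp add: nested_partition_def)
    have P20: "P2 0 = {{0..<n2}}" using P2 by (simp add: nested_partition_def)
    have a0: "a 0 = A1" unfolding a_def
      by (rule eq_matI) (use A1c blk_carrier[OF A1c, of P1 0] in \<open>auto simp: blk_entry[OF A1c] P10\<close>)
    have b0: "b 0 = A2" unfolding b_def
      by (rule eq_matI) (use A2c blk_carrier[OF A2c, of P2 0] in \<open>auto simp: blk_entry[OF A2c] P20\<close>)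
    have sb1: "\<And>f. \<alpha>1 * nsq n1 f \<le> Qm A1 n1 f \<and> Qm A1 n1 f \<le> \<beta>1 * nsq n1 f"
      by (rule spec_bounds[OF A1c A1s spec1])
    have sb2: "\<And>f. \<alpha>2 * nsq n2 f \<le> Qm A2 n2 f \<and> Qm A2 n2 f \<le> \<beta>2 * nsq n2 f"
      by (rule spec_bounds[OF A2c A2s spec2])
    have ab: "\<alpha>1 * nsq n1 f \<le> Qm (a h) n1 f \<and> Qm (a h) n1 f \<le> \<beta>1 * nsq n1 f" if "h \<le> l" for h f
      unfolding a_def by (rule blk_bounds[where P=P1 and h=h, OF np_part[OF P1 that] A1c sb1])
    have bb: "\<alpha>2 * nsq n2 f \<le> Qm (b h) n2 f \<and> Qm (b h) n2 f \<le> \<beta>2 * nsq n2 f" if "h \<le> l" for h f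
      unfolding b_def by (rule blk_bounds[where P=P2 and h=h, OF np_part[OF P2 that] A2c sb2])
    have e1: "nsq n (\<lambda>i. if i = 0 then 1 else 0) = 1" if "n > 0" for n
      unfolding nsq_def using that by (simp add: if_distrib[of "\<lambda>x. x^2"] cong: if_cong)
    have ab1: "\<alpha>1 \<le> \<beta>1" using sb1[of "\<lambda>i. if i = 0 then 1 else 0"] e1[OF n1] by simp
    have ab2: "\<alpha>2 \<le> \<beta>2" using sb2[of "\<lambda>i. if i = 0 then 1 else 0"] e1[OF n2] by simp
    have kap1: "\<kappa> \<ge> 1" unfolding \<kappa>_def using ab1 ab2 \<alpha>1 \<alpha>2 by simp
    have sA1: "A1$$(i,j) = A1$$(j,i)" if "i < n1" "j < n1" for i j
    proof -
      have "A1$$(i,j) = A1\<^sup>T $$ (i,j)" using A1s by simp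
      also have "\<dots> = A1$$(j,i)" using A1c that by simp
      finally show ?thesis .
    qed
    have sA2: "A2$$(i,j) = A2$$(j,i)" if "i < n2" "j < n2" for i j
    proof -
      have "A2$$(i,j) = A2\<^sup>T $$ (i,j)" using A2s by simp
      also have "\<dots> = A2$$(j,i)" using A2c that by simp
      finally show ?thesis .
    qed
    have sa: "(a h - a h')$$(i,j) = (a h - a h')$$(j,i)" if "i < n1" "j < n1" for h h' i j
    proof -
      have "a h $$ (i,j) = a h $$ (j,i)" "a h' $$ (i,j) = a h' $$ (j,i)"
        unfolding a_def using sA1[OF that] by (auto simp: blk_entry[OF A1c] that)
      moreover have "dim_row (a h') = n1" "dim_col (a h') = n1" using ac[of h'] by auto
      ultimately show ?thesis using that by simp
    qed
    have sb: "(b h - b h')$$(i,j) = (b h - b h')$$(j,i)" if "i < n2" "j < n2" for h h' i j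
    proof -
      have "b h $$ (i,j) = b h $$ (j,i)" "b h' $$ (i,j) = b h' $$ (j,i)"
        unfolding b_def using sA2[OF that] by (auto simp: blk_entry[OF A2c] that)
      moreover have "dim_row (b h') = n2" "dim_col (b h') = n2" using bc[of h'] by auto
      ultimately show ?thesis using that by simp
    qed
    have da: "\<bar>Qm (a h - a (Suc h)) n1 f\<bar> \<le> \<beta>1 * nsq n1 f" if "h < l" for h f
    proof -
      have "0 \<le> \<alpha>1 * nsq n1 f" using \<alpha>1 by (simp add: nsq_nonneg)
      thus ?thesis using ab[of h f] ab[of "Suc h" f] that Qm_minus[OF ac ac] by (simp add: abs_le_iff)
    qed
    have db: "\<bar>Qm (b h - b (Suc h)) n2 f\<bar> \<le> \<beta>2 * nsq n2 f" if "h < l" for h f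
    proof -
      have "0 \<le> \<alpha>2 * nsq n2 f" using \<alpha>2 by (simp add: nsq_nonneg)
      thus ?thesis using bb[of h f] bb[of "Suc h" f] that Qm_minus[OF bc bc] by (simp add: abs_le_iff)
    qed
    have rl: "frob (r l) \<le> \<epsilon> * frob B" using Rl by (simp add: r_def Xs_l a_def b_def)
    have rec: "frob (r h) \<le> \<epsilon> * frob (Xi h) + frob (r (Suc h))" if h: "h < l" for h
    proof -
      have rid: "r h = (a h * dX h + dX h * b h - Xi h) + r (Suc h)"
        unfolding r_def Xi_def Xs_step[OF h]
        by (rule key_id[OF ac ac bc bc dX[OF h] Xsc B])
      have Rh': "frob (a h * dX h + dX h * b h - Xi h) \<le> \<epsilon> * frob (Xi h)"
        using Rh[OF h] by (simp add: Let_def Xi_def a_def b_def Xs_def)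
      have Rc: "a h * dX h + dX h * b h - Xi h \<in> carrier_mat n1 n2" by (rule minus_carrier_mat[OF Xic])
      have d: "dim_row (r (Suc h)) = n1" "dim_col (r (Suc h)) = n2"
        "dim_row (Xi h) = n1" "dim_col (Xi h) = n2" using rc[of "Suc h"] Xic[of h] by auto
      have "frob (r h) \<le> frob (a h * dX h + dX h * b h - Xi h) + frob (r (Suc h))"
        by (rule frob_tri[OF Rc rc[of "Suc h"] rc[of h]]) (simp add: rid d abs_triangle_ineq)
      thus ?thesis using Rh' by simp
    qed
    have xib: "frob (Xi h) \<le> \<kappa> * (frob (r (Suc h)) + frob B)" if h: "h < l" for h
    proof -
      let ?x = "Xs (Suc h)"
      let ?P = "(a h - a (Suc h)) * ?x"
      let ?Q = "?x * (b h - b (Suc h))"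
      have Pc: "?P \<in> carrier_mat n1 n2" by (rule mult_carrier_mat[OF minus_carrier_mat[OF ac] Xsc])
      have Qc: "?Q \<in> carrier_mat n1 n2" by (rule mult_carrier_mat[OF Xsc minus_carrier_mat[OF bc]])
      have dPQ: "dim_row ?P = n1" "dim_col ?P = n2" "dim_row ?Q = n1" "dim_col ?Q = n2"
        using Pc Qc by auto
      have "frob (Xi h) \<le> frob ?P + frob ?Q"
      proof (rule frob_tri[OF Pc Qc Xic])
        fix i j assume ij: "i < n1" "j < n2"
        have e1: "(-?P - ?Q)$$(i,j) = (-?P)$$(i,j) - ?Q$$(i,j)"
          by (rule index_minus_mat(1)) (use ij dPQ in auto)
        have e2: "(-?P)$$(i,j) = - (?P$$(i,j))"
          by (rule index_uminus_mat(1)) (use ij dPQ in auto)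
        have "Xi h $$ (i,j) = - (?P $$ (i,j)) - ?Q $$ (i,j)" unfolding Xi_def e1 e2 ..
        thus "\<bar>Xi h $$ (i,j)\<bar> \<le> \<bar>?P $$ (i,j)\<bar> + \<bar>?Q $$ (i,j)\<bar>" by arith
      qed
      also have "frob ?P \<le> \<beta>1 * frob ?x"
        by (rule frob_mult_left[OF _ Xsc sa da[OF h]]) (use minus_carrier_mat[OF ac] ab1 \<alpha>1 in auto)
      also have "frob ?Q \<le> \<beta>2 * frob ?x"
        by (rule frob_mult_right[OF _ Xsc sb db[OF h]]) (use minus_carrier_mat[OF bc] ab2 \<alpha>2 in auto)
      finally have 1: "frob (Xi h) \<le> (\<beta>1 + \<beta>2) * frob ?x" by (simp add: algebra_simps)
      have "(\<alpha>1 + \<alpha>2) * frob ?x \<le> frob (a (Suc h) * ?x + ?x * b (Suc h))"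
        by (rule sylv_lower[OF ac bc Xsc]) (use ab[of "Suc h"] bb[of "Suc h"] h \<alpha>1 \<alpha>2 in auto)
      also have "\<dots> \<le> frob (r (Suc h)) + frob B"
      proof (rule frob_tri[OF rc[of "Suc h"] B])
        show "a (Suc h) * ?x + ?x * b (Suc h) \<in> carrier_mat n1 n2"
          using ac[of "Suc h"] bc[of "Suc h"] Xsc[of "Suc h"] by simp
        fix i j assume ij: "i < n1" "j < n2"
        have dB: "dim_row B = n1" "dim_col B = n2" using B by auto
        have "r (Suc h) $$ (i,j) = (a (Suc h) * ?x + ?x * b (Suc h)) $$ (i,j) - B $$ (i,j)"
          using ij by (simp add: r_def dB)
        thus "\<bar>(a (Suc h) * ?x + ?x * b (Suc h)) $$ (i,j)\<bar> \<le> \<bar>r (Suc h) $$ (i,j)\<bar> + \<bar>B $$ (i,j)\<bar>" by arith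
      qed
      finally have "frob ?x \<le> (frob (r (Suc h)) + frob B) / (\<alpha>1 + \<alpha>2)"
        using \<alpha>1 \<alpha>2 by (simp add: pos_le_divide_eq mult.commute)
      hence "(\<beta>1 + \<beta>2) * frob ?x \<le> (\<beta>1 + \<beta>2) * ((frob (r (Suc h)) + frob B) / (\<alpha>1 + \<alpha>2))"
        using ab1 ab2 \<alpha>1 \<alpha>2 by (intro mult_left_mono) auto
      with 1 show ?thesis by (simp add: \<kappa>_def)
    qed
    define \<rho> where "\<rho> = (\<lambda>h. frob (r h))"
    define bB where "bB = frob B"
    have bB0: "bB \<ge> 0" by (simp add: bB_def frob_nonneg)
    have goal_eq: "frob (A1 * (Xl + foldr (+) (map dX [0..<l]) (0\<^sub>m n1 n2)) + (Xl + foldr (+) (map dX [0..<l]) (0\<^sub>m n1 n2)) * A2 - B) = \<rho> 0"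
      using a0 b0 by (simp add: \<rho>_def r_def Xs_def)
    have "\<rho> 0 \<le> (real l + 1)^2 * \<kappa> * \<epsilon> * bB"
    proof (cases "\<epsilon> < 0")
      case True
      have "0 \<le> \<rho> l" by (simp add: \<rho>_def frob_nonneg)
      with rl have "0 \<le> \<epsilon> * bB" by (simp add: \<rho>_def bB_def)
      hence b0': "bB = 0" using True bB0 by (smt (verit) mult_neg_pos)
      have "\<forall>k\<le>l. \<rho> (l - k) \<le> 0"
      proof (intro allI impI)
        fix k assume "k \<le> l"
        thus "\<rho> (l - k) \<le> 0"
        proof (induction k)
          case 0 thus ?case using rl b0' by (simp add: \<rho>_def bB_def)
        next
          case (Suc k)
          hence IH: "\<rho> (l - k) \<le> 0" and hl: "l - Suc k < l" by auto
          have sk: "Suc (l - Suc k) = l - k" using Suc.prems by simp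
          have "\<epsilon> * frob (Xi (l - Suc k)) \<le> 0" using True frob_nonneg[of "Xi (l - Suc k)"]
            by (simp add: mult_nonpos_nonneg)
          thus ?case using rec[OF hl] IH unfolding sk \<rho>_def by simp
        qed
      qed
      hence "\<rho> 0 \<le> 0" by (metis diff_self_eq_0 order_refl)
      thus ?thesis using b0' by simp
    next
      case False
      hence e0: "\<epsilon> \<ge> 0" by simp
      define x where "x = \<kappa> * \<epsilon>"
      have x0: "x \<ge> 0" using kap1 e0 by (simp add: x_def)
      have ex: "\<epsilon> \<le> x" using kap1 e0 unfolding x_def by (simp add: mult_le_cancel_right1)
      have ind: "\<rho> (l - k) + bB \<le> (1+x)^k * (\<rho> l + bB)" if "k \<le> l" for k
        using that
      proof (induction k)
        case 0 thus ?case by simp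
      next
        case (Suc k)
        hence IH: "\<rho> (l - k) + bB \<le> (1+x)^k * (\<rho> l + bB)" and hl: "l - Suc k < l" by auto
        have sk: "Suc (l - Suc k) = l - k" using Suc.prems by simp
        have "\<rho> (l - Suc k) \<le> \<epsilon> * frob (Xi (l - Suc k)) + \<rho> (l - k)"
          using rec[OF hl] unfolding sk \<rho>_def .
        also have "\<epsilon> * frob (Xi (l - Suc k)) \<le> \<epsilon> * (\<kappa> * (\<rho> (l - k) + bB))"
          using xib[OF hl] e0 unfolding sk \<rho>_def bB_def by (intro mult_left_mono) auto
        finally have "\<rho> (l - Suc k) + bB \<le> (1 + x) * (\<rho> (l - k) + bB)"
          by (simp add: x_def algebra_simps)
        also have "\<dots> \<le> (1 + x) * ((1+x)^k * (\<rho> l + bB))"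
          using IH x0 by (intro mult_left_mono) auto
        finally show ?case by simp
      qed
      have "\<rho> 0 + bB \<le> (1+x)^l * (\<rho> l + bB)" using ind[of l] by simp
      also have "\<dots> \<le> (1+x)^l * ((1 + x) * bB)"
      proof (intro mult_left_mono)
        have "\<rho> l \<le> \<epsilon> * bB" using rl by (simp add: \<rho>_def bB_def)
        also have "\<dots> \<le> x * bB" using ex bB0 by (intro mult_right_mono) auto
        finally show "\<rho> l + bB \<le> (1 + x) * bB" by (simp add: algebra_simps)
      qed (use x0 in auto)
      finally have "\<rho> 0 \<le> ((1+x)^(l+1) - 1) * bB" by (simp add: algebra_simps)
      also have "\<dots> \<le> ((real l + 1)^2 * x) * bB"
      proof (intro mult_right_mono numeric x0 bB0)
        show "real l * x < 2" using small by (simp add: x_def \<kappa>_def mult.assoc)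
      qed
      finally show ?thesis by (simp add: x_def mult.assoc)
    qed
    thus ?thesis using goal_eq by (simp add: bB_def \<kappa>_def)
  qed
qed

end
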